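(* Let $G=\mathrm{srg}(n,k,\lambda,\mu)$ be a strongly regular graph with $\mu\ge1$. Then $\mathrm{QEC}(G)\le0$ if and only if $k-2\lambda+\mu\le4$. Moreover, $\mathrm{QEC}(G)=0$ if and only if $k-2\lambda+\mu=4$.
   Context: A graph $G=(V,E)$ is finite and simple. It is strongly regular with parameters $\mathrm{srg}(n,k,\lambda,\mu)$ if $|V|=n$, every vertex has exactly $k$ neighbours, every two adjacent vertices have exactly $\lambda$ common neighbours, and every two distinct non-adjacent vertices have exactly $\mu$ common neighbours. The hypothesis $\mu\ge1$ means in particular that there exist distinct non-adjacent vertices (so $G$ is not complete) and that $G$ is connected. For a connected graph $G=(V,E)$ with $|V|\ge2$, let $D=[d(x,y)]_{x,y\in V}$ be its distance matrix ($d$ the graph distance), and define the quadratic embedding constant \[ \mathrm{QEC}(G)=\max\{\langle f,Df\rangle : f\in\mathbb{R}^V,\ \langle f,f\rangle=1,\ \langle \mathbf{1},f\rangle=0\}, \] where $\mathbf 1$ is the all-ones vector and $\langle\cdot,\cdot\rangle$ the standard inner product. *)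

theory Defs
  imports "HOL-Analysis.Analysis"
begin

definition simple_graph :: "'a set \<Rightarrow> ('a \<Rightarrow> 'a \<Rightarrow> bool) \<Rightarrow> bool" where
  "simple_graph V E \<longleftrightarrow> finite V \<and> (\<forall>x y. E x y \<longrightarrow> x \<in> V \<and> y \<in> V)
     \<and> (\<forall>x y. E x y \<longrightarrow> E y x) \<and> (\<forall>x. \<not> E x x)"

definition srg :: "'a set \<Rightarrow> ('a \<Rightarrow> 'a \<Rightarrow> bool) \<Rightarrow> nat \<Rightarrow> nat \<Rightarrow> nat \<Rightarrow> nat \<Rightarrow> bool" where
  "srg V E n k lam mu \<longleftrightarrow> simple_graph V E \<and> card V = n
     \<and> (\<forall>x\<in>V. card {y\<in>V. E x y} = k)
     \<and> (\<forall>x\<in>V. \<forall>y\<in>V. E x y \<longrightarrow> card {z\<in>V. E x z \<and> E y z} = lam)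
     \<and> (\<forall>x\<in>V. \<forall>y\<in>V. x \<noteq> y \<and> \<not> E x y \<longrightarrow> card {z\<in>V. E x z \<and> E y z} = mu)"

definition is_walk :: "'a set \<Rightarrow> ('a \<Rightarrow> 'a \<Rightarrow> bool) \<Rightarrow> 'a list \<Rightarrow> bool" where
  "is_walk V E xs \<longleftrightarrow> xs \<noteq> [] \<and> set xs \<subseteq> V \<and> (\<forall>i. Suc i < length xs \<longrightarrow> E (xs ! i) (xs ! Suc i))"

definition gdist :: "'a set \<Rightarrow> ('a \<Rightarrow> 'a \<Rightarrow> bool) \<Rightarrow> 'a \<Rightarrow> 'a \<Rightarrow> nat" where
  "gdist V E x y = (LEAST m. \<exists>xs. is_walk V E xs \<and> hd xs = x \<and> last xs = y \<and> length xs = Suc m)"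

text \<open>Quadratic embedding constant: maximum of <f, D f> over f with <f,f> = 1, <1,f> = 0
 (for connected graphs with at least two vertices this maximum exists, so it equals the supremum).\<close>

definition QEC :: "'a set \<Rightarrow> ('a \<Rightarrow> 'a \<Rightarrow> bool) \<Rightarrow> real" where
  "QEC V E = Sup {(\<Sum>x\<in>V. \<Sum>y\<in>V. f x * real (gdist V E x y) * f y) | f :: 'a \<Rightarrow> real.
       (\<Sum>x\<in>V. (f x)\<^sup>2) = 1 \<and> (\<Sum>x\<in>V. f x) = 0}"

end

theory Submission
  imports Defs
begin

definition ind :: "('a \<Rightarrow> 'a \<Rightarrow> bool) \<Rightarrow> 'a \<Rightarrow> 'a \<Rightarrow> real" where
  "ind E x y = of_bool (E x y)"

definition Aop :: "'a set \<Rightarrow> ('a \<Rightarrow> 'a \<Rightarrow> bool) \<Rightarrow> ('a \<Rightarrow> real) \<Rightarrow> 'a \<Rightarrow> real" where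
  "Aop V E u = (\<lambda>x. \<Sum>y\<in>V. ind E x y * u y)"

context
  fixes V :: "'a set" and E :: "'a \<Rightarrow> 'a \<Rightarrow> bool" and n k lam mu :: nat
  assumes srg: "srg V E n k lam mu" and mu1: "mu \<ge> 1"
begin

lemma fin: "finite V" using srg by (simp add: srg_def simple_graph_def)
lemma inV: "E x y \<Longrightarrow> x \<in> V \<and> y \<in> V" using srg by (simp add: srg_def simple_graph_def)
lemma symE: "E x y \<Longrightarrow> E y x" using srg by (simp add: srg_def simple_graph_def)
lemma irr: "\<not> E x x" using srg by (simp add: srg_def simple_graph_def)
lemma degk: "x \<in> V \<Longrightarrow> card {y\<in>V. E x y} = k" using srg by (simp add: srg_def)
lemma lamc: "x \<in> V \<Longrightarrow> y \<in> V \<Longrightarrow> E x y \<Longrightarrow> card {z\<in>V. E x z \<and> E y z} = lam"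
  using srg by (simp add: srg_def)
lemma muc: "x \<in> V \<Longrightarrow> y \<in> V \<Longrightarrow> x \<noteq> y \<Longrightarrow> \<not> E x y \<Longrightarrow> card {z\<in>V. E x z \<and> E y z} = mu"
  using srg by (simp add: srg_def)

lemma ind_sym: "ind E x y = ind E y x"
proof -
  have "E x y = E y x" using symE by blast
  thus ?thesis unfolding ind_def by simp
qed

lemma common_ex:
  assumes "x \<in> V" "y \<in> V" "x \<noteq> y" "\<not> E x y"
  shows "\<exists>z\<in>V. E x z \<and> E z y"
proof -
  have "card {z\<in>V. E x z \<and> E y z} \<ge> 1" using muc[OF assms] mu1 by simp
  hence "{z\<in>V. E x z \<and> E y z} \<noteq> {}" by (metis card.empty not_one_le_zero)
  thus ?thesis using symE by blast
qed

lemma gdist_val: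
  assumes x: "x \<in> V" and y: "y \<in> V"
  shows "real (gdist V E x y) = 2 - 2 * of_bool (x = y) - ind E x y"
proof -
  define P where "P m = (\<exists>xs. is_walk V E xs \<and> hd xs = x \<and> last xs = y \<and> length xs = Suc m)" for m
  have g: "gdist V E x y = (LEAST m. P m)" unfolding gdist_def P_def by simp
  have P0: "P 0 \<Longrightarrow> x = y"
    unfolding P_def by (auto simp: length_Suc_conv)
  have P1: "P 1 \<Longrightarrow> E x y"
  proof -
    assume "P 1"
    then obtain xs where w: "is_walk V E xs" "hd xs = x" "last xs = y" "length xs = 2"
      unfolding P_def by auto
    then obtain a b where "xs = [a, b]" by (auto simp: length_Suc_conv numeral_2_eq_2)
    with w show "E x y" unfolding is_walk_def by force
  qed
  show ?thesis
  proof (cases "x = y")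
    case True
    have "P 0" unfolding P_def using x True by (intro exI[of _ "[x]"]) (auto simp: is_walk_def)
    hence "(LEAST m. P m) = 0" by (simp add: Least_eq_0)
    thus ?thesis using g True irr by (simp add: ind_def)
  next
    case False
    show ?thesis
    proof (cases "E x y")
      case True
      have "P 1" unfolding P_def using x y True
        by (intro exI[of _ "[x,y]"]) (auto simp: is_walk_def)
      moreover have "\<And>m. P m \<Longrightarrow> 1 \<le> m" using P0 False
        by (metis One_nat_def Suc_leI neq0_conv)
      ultimately have "(LEAST m. P m) = 1" by (intro Least_equality) auto
      thus ?thesis using g True False by (simp add: ind_def)
    next
      case nE: False
      obtain z where z: "z \<in> V" "E x z" "E z y" using common_ex[OF x y False nE] by blast
      have "is_walk V E [x,z,y]" using x y z unfolding is_walk_def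
        by (auto simp: less_Suc_eq nth_Cons split: nat.split)
      hence "P 2" unfolding P_def by (intro exI[of _ "[x,z,y]"]) auto
      moreover have "\<And>m. P m \<Longrightarrow> 2 \<le> m"
      proof -
        fix m assume "P m"
        show "2 \<le> m"
        proof (rule ccontr)
          assume "\<not> 2 \<le> m"
          hence "m = 0 \<or> m = 1" by auto
          thus False using P0 P1 \<open>P m\<close> False nE by auto
        qed
      qed
      ultimately have "(LEAST m. P m) = 2" by (intro Least_equality) auto
      thus ?thesis using g False nE by (simp add: ind_def)
    qed
  qed
qed

lemma cnt:
  assumes x: "x \<in> V" and y: "y \<in> V"
  shows "(\<Sum>z\<in>V. ind E x z * ind E z y) = real mu + (real k - real mu) * of_bool (x = y) + (real lam - real mu) * ind E x y"
proof -
  have "(\<Sum>z\<in>V. ind E x z * ind E z y) = (\<Sum>z\<in>V. of_bool (E x z \<and> E y z))"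
    by (rule sum.cong) (auto simp: ind_def intro: symE)
  also have "\<dots> = real (card (V \<inter> {z. E x z \<and> E y z}))" using fin by simp
  also have "V \<inter> {z. E x z \<and> E y z} = {z\<in>V. E x z \<and> E y z}" by blast
  finally have c: "(\<Sum>z\<in>V. ind E x z * ind E z y) = real (card {z\<in>V. E x z \<and> E y z})" .
  show ?thesis
  proof (cases "x = y")
    case True
    have "{z\<in>V. E x z \<and> E y z} = {z\<in>V. E x z}" using True by auto
    thus ?thesis using c True degk[OF x] irr by (simp add: ind_def)
  next
    case False
    show ?thesis
    proof (cases "E x y")
      case True
      thus ?thesis using c False lamc[OF x y True] by (simp add: ind_def)
    next
      case nE: False
      thus ?thesis using c False muc[OF x y False nE] by (simp add: ind_def)
    qed
  qed
qed

lemma AA: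
  assumes f0: "(\<Sum>y\<in>V. f y) = 0" and x: "x \<in> V"
  shows "Aop V E (Aop V E f) x = (real lam - real mu) * Aop V E f x + (real k - real mu) * f x"
proof -
  have "Aop V E (Aop V E f) x = (\<Sum>z\<in>V. \<Sum>y\<in>V. ind E x z * ind E z y * f y)"
    unfolding Aop_def by (simp add: sum_distrib_left mult.assoc)
  also have "\<dots> = (\<Sum>y\<in>V. \<Sum>z\<in>V. ind E x z * ind E z y * f y)" by (rule sum.swap)
  also have "\<dots> = (\<Sum>y\<in>V. f y * (\<Sum>z\<in>V. ind E x z * ind E z y))"
    by (simp add: sum_distrib_left mult.commute mult.left_commute)
  also have "\<dots> = (\<Sum>y\<in>V. real mu * f y + (real k - real mu) * (f y * of_bool (x = y)) + (real lam - real mu) * (ind E x y * f y))"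
  proof (rule sum.cong)
    fix y assume y: "y \<in> V"
    show "f y * (\<Sum>z\<in>V. ind E x z * ind E z y) = real mu * f y + (real k - real mu) * (f y * of_bool (x = y)) + (real lam - real mu) * (ind E x y * f y)"
      unfolding cnt[OF x y] by (simp add: algebra_simps)
  qed simp
  also have "\<dots> = real mu * (\<Sum>y\<in>V. f y) + (real k - real mu) * (\<Sum>y\<in>V. f y * of_bool (x = y)) + (real lam - real mu) * (\<Sum>y\<in>V. ind E x y * f y)"
    by (simp add: sum.distrib sum_distrib_left)
  also have "(\<Sum>y\<in>V. f y * of_bool (x = y)) = f x"
  proof -
    have "(\<Sum>y\<in>V. f y * of_bool (x = y)) = (\<Sum>y\<in>V. if y = x then f y else 0)"
      by (rule sum.cong) auto
    also have "\<dots> = f x" using fin x by (simp add: sum.delta')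
    finally show ?thesis .
  qed
  finally show ?thesis using f0 by (simp add: Aop_def)
qed

lemma sumA:
  assumes f0: "(\<Sum>y\<in>V. f y) = 0"
  shows "(\<Sum>x\<in>V. Aop V E f x) = 0"
proof -
  have "(\<Sum>x\<in>V. Aop V E f x) = (\<Sum>y\<in>V. \<Sum>x\<in>V. ind E x y * f y)"
    unfolding Aop_def by (rule sum.swap)
  also have "\<dots> = (\<Sum>y\<in>V. real k * f y)"
  proof (rule sum.cong)
    fix y assume y: "y \<in> V"
    have "(\<Sum>x\<in>V. ind E x y) = (\<Sum>x\<in>V. of_bool (E y x))"
      by (rule sum.cong) (auto simp: ind_def intro: symE)
    also have "\<dots> = real (card (V \<inter> {x. E y x}))" using fin by simp
    also have "V \<inter> {x. E y x} = {x\<in>V. E y x}" by blast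
    finally show "(\<Sum>x\<in>V. ind E x y * f y) = real k * f y"
      using degk[OF y] by (simp add: sum_distrib_right[symmetric])
  qed simp
  finally show ?thesis using f0 by (simp add: sum_distrib_left[symmetric])
qed

lemma Asym: "(\<Sum>x\<in>V. u x * Aop V E v x) = (\<Sum>x\<in>V. Aop V E u x * v x)"
proof -
  have "(\<Sum>x\<in>V. u x * Aop V E v x) = (\<Sum>x\<in>V. \<Sum>y\<in>V. u x * ind E x y * v y)"
    unfolding Aop_def by (simp add: sum_distrib_left mult.assoc)
  also have "\<dots> = (\<Sum>y\<in>V. \<Sum>x\<in>V. u x * ind E x y * v y)" by (rule sum.swap)
  also have "\<dots> = (\<Sum>y\<in>V. Aop V E u y * v y)"
  proof (rule sum.cong)
    fix y assume "y \<in> V"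
    have "Aop V E u y * v y = (\<Sum>x\<in>V. ind E y x * u x * v y)"
      unfolding Aop_def by (simp add: sum_distrib_right)
    also have "\<dots> = (\<Sum>x\<in>V. u x * ind E x y * v y)"
      by (rule sum.cong) (simp_all add: ind_sym)
    finally show "(\<Sum>x\<in>V. u x * ind E x y * v y) = Aop V E u y * v y" by simp
  qed simp
  finally show ?thesis .
qed

lemma val:
  assumes f0: "(\<Sum>y\<in>V. f y) = 0"
  shows "(\<Sum>x\<in>V. \<Sum>y\<in>V. f x * real (gdist V E x y) * f y) = -2 * (\<Sum>x\<in>V. (f x)\<^sup>2) - (\<Sum>x\<in>V. f x * Aop V E f x)"
proof -
  have "(\<Sum>x\<in>V. \<Sum>y\<in>V. f x * real (gdist V E x y) * f y) = (\<Sum>x\<in>V. -2 * (f x)\<^sup>2 - f x * Aop V E f x)"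
  proof (rule sum.cong)
    fix x assume x: "x \<in> V"
    have "(\<Sum>y\<in>V. f x * real (gdist V E x y) * f y) = (\<Sum>y\<in>V. 2 * f x * f y - 2 * f x * (if y = x then f y else 0) - f x * (ind E x y * f y))"
      by (rule sum.cong) (auto simp: gdist_val x algebra_simps)
    also have "\<dots> = 2 * f x * (\<Sum>y\<in>V. f y) - 2 * f x * (\<Sum>y\<in>V. if y = x then f y else 0) - f x * Aop V E f x"
      by (simp add: sum_subtractf sum_distrib_left Aop_def)
    also have "\<dots> = -2 * (f x)\<^sup>2 - f x * Aop V E f x"
      using f0 fin x by (simp add: sum.delta' power2_eq_square)
    finally show "(\<Sum>y\<in>V. f x * real (gdist V E x y) * f y) = -2 * (f x)\<^sup>2 - f x * Aop V E f x" .
  qed simp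
  also have "\<dots> = -2 * (\<Sum>x\<in>V. (f x)\<^sup>2) - (\<Sum>x\<in>V. f x * Aop V E f x)"
    by (simp add: sum_subtractf sum_distrib_left)
  finally show ?thesis .
qed

lemma sq_expand:
  fixes a b :: "'a \<Rightarrow> real"
  shows "(\<Sum>x\<in>V. (a x - c * b x)\<^sup>2) = (\<Sum>x\<in>V. a x * a x) - 2 * c * (\<Sum>x\<in>V. b x * a x) + c\<^sup>2 * (\<Sum>x\<in>V. (b x)\<^sup>2)"
proof -
  have "(\<Sum>x\<in>V. (a x - c * b x)\<^sup>2) = (\<Sum>x\<in>V. a x * a x - 2 * c * (b x * a x) + c\<^sup>2 * (b x)\<^sup>2)"
    by (rule sum.cong) (simp_all add: power2_eq_square algebra_simps)
  thus ?thesis by (simp add: sum.distrib sum_subtractf sum_distrib_left)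
qed

lemma AfAf:
  assumes f0: "(\<Sum>y\<in>V. f y) = 0"
  shows "(\<Sum>x\<in>V. Aop V E f x * Aop V E f x) = (real lam - real mu) * (\<Sum>x\<in>V. f x * Aop V E f x) + (real k - real mu) * (\<Sum>x\<in>V. (f x)\<^sup>2)"
proof -
  have "(\<Sum>x\<in>V. Aop V E f x * Aop V E f x) = (\<Sum>x\<in>V. f x * Aop V E (Aop V E f) x)"
    using Asym[of f "Aop V E f"] by simp
  also have "\<dots> = (\<Sum>x\<in>V. (real lam - real mu) * (f x * Aop V E f x) + (real k - real mu) * (f x)\<^sup>2)"
    by (rule sum.cong) (simp_all add: AA f0 algebra_simps power2_eq_square)
  finally show ?thesis by (simp add: sum.distrib sum_distrib_left)
qed

lemma lower:
  assumes f0: "(\<Sum>y\<in>V. f y) = 0" and t: "t > 0" and tt: "t\<^sup>2 = (real lam - real mu)\<^sup>2 + 4 * (real k - real mu)"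
  shows "(\<Sum>x\<in>V. f x * Aop V E f x) \<ge> ((real lam - real mu) - t) / 2 * (\<Sum>x\<in>V. (f x)\<^sup>2)"
proof -
  define L where "L = real lam - real mu"
  define s where "s = (L - t) / 2"
  define Q where "Q = (\<Sum>x\<in>V. f x * Aop V E f x)"
  define N where "N = (\<Sum>x\<in>V. (f x)\<^sup>2)"
  have "0 \<le> (\<Sum>x\<in>V. (Aop V E f x - s * f x)\<^sup>2)" by (simp add: sum_nonneg)
  also have "\<dots> = L * Q + (real k - real mu) * N - 2 * s * Q + s\<^sup>2 * N"
    unfolding sq_expand AfAf[OF f0] L_def Q_def N_def by simp
  also have "\<dots> = L * Q + ((t\<^sup>2 - L\<^sup>2) / 4) * N - 2 * s * Q + s\<^sup>2 * N"
    using tt unfolding L_def by simp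
  also have "\<dots> = t * (Q - s * N)"
    unfolding s_def by (simp add: power2_eq_square field_simps)
  finally have "0 \<le> t * (Q - s * N)" .
  hence "0 \<le> Q - s * N" using t by (simp add: zero_le_mult_iff)
  thus ?thesis unfolding Q_def s_def L_def N_def by simp
qed

lemma Aop_lin: "Aop V E (\<lambda>z. a z - c * b z) y = Aop V E a y - c * Aop V E b y"
  unfolding Aop_def by (simp add: sum_subtractf sum_distrib_left algebra_simps)

lemma Aop_div: "Aop V E (\<lambda>z. a z / c) y = Aop V E a y / c"
  unfolding Aop_def by (simp add: sum_divide_distrib)

lemma witness:
  assumes e: "E x w" and t: "t > 0" and tt: "t\<^sup>2 = (real lam - real mu)\<^sup>2 + 4 * (real k - real mu)"
    and hr: "(real lam - real mu) + t \<ge> 0"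
  shows "\<exists>g. (\<Sum>z\<in>V. g z) = 0 \<and> (\<Sum>z\<in>V. (g z)\<^sup>2) = 1 \<and> (\<Sum>z\<in>V. g z * Aop V E g z) = ((real lam - real mu) - t) / 2"
proof -
  define L where "L = real lam - real mu"
  define s where "s = (L - t) / 2"
  define r where "r = (L + t) / 2"
  have x: "x \<in> V" and w: "w \<in> V" using inV[OF e] by auto
  have xw: "x \<noteq> w" using e irr by auto
  define f where "f z = (if z = x then 1 else 0) - (if z = w then 1 else (0::real))" for z
  have fs: "(\<Sum>z\<in>V. f z) = 0" unfolding f_def using fin x w by (simp add: sum_subtractf)
  have Af: "Aop V E f z = ind E z x - ind E z w" for z
  proof -
    have "Aop V E f z = (\<Sum>y\<in>V. (if y = x then ind E z y else 0) - (if y = w then ind E z y else 0))"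
      unfolding Aop_def f_def by (rule sum.cong) auto
    also have "\<dots> = ind E z x - ind E z w" using fin x w by (simp add: sum_subtractf)
    finally show ?thesis .
  qed
  define h where "h z = Aop V E f z - r * f z" for z
  have hs: "(\<Sum>z\<in>V. h z) = 0" unfolding h_def
    using sumA[OF fs] fs by (simp add: sum_subtractf sum_distrib_left[symmetric])
  have Ah: "Aop V E h z = s * h z" if z: "z \<in> V" for z
  proof -
    have "Aop V E h z = Aop V E (Aop V E f) z - r * Aop V E f z"
      unfolding h_def by (rule Aop_lin)
    also have "\<dots> = (L - r) * Aop V E f z + (real k - real mu) * f z"
      using AA[OF fs z] unfolding L_def by (simp add: algebra_simps)
    also have "real k - real mu = (t\<^sup>2 - L\<^sup>2) / 4" using tt unfolding L_def by simp
    also have "(L - r) * Aop V E f z + (t\<^sup>2 - L\<^sup>2) / 4 * f z = s * h z"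
      unfolding h_def s_def r_def by (simp add: power2_eq_square field_simps)
    finally show ?thesis .
  qed
  define N where "N = (\<Sum>z\<in>V. (h z)\<^sup>2)"
  have hx: "h x = -1 - r" unfolding h_def Af using xw irr by (simp add: f_def ind_def e)
  have r0: "r \<ge> 0" using hr unfolding r_def L_def by simp
  have "(h x)\<^sup>2 \<le> N" unfolding N_def using fin x by (intro member_le_sum) auto
  moreover have "(h x)\<^sup>2 \<ge> 1" unfolding hx using r0 by (simp add: power2_eq_square algebra_simps)
  ultimately have N: "N > 0" by simp
  have hA: "(\<Sum>z\<in>V. h z * Aop V E h z) = s * N"
    unfolding N_def by (simp add: Ah sum_distrib_left power2_eq_square algebra_simps cong: sum.cong)
  define g where "g z = h z / sqrt N" for z
  have "(\<Sum>z\<in>V. g z) = 0" unfolding g_def using hs by (simp add: sum_divide_distrib[symmetric])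
  moreover have "(\<Sum>z\<in>V. (g z)\<^sup>2) = 1"
    unfolding g_def using N by (simp add: power_divide sum_divide_distrib[symmetric] N_def[symmetric])
  moreover have "(\<Sum>z\<in>V. g z * Aop V E g z) = s"
  proof -
    have "(\<Sum>z\<in>V. g z * Aop V E g z) = (\<Sum>z\<in>V. h z * Aop V E h z) / (sqrt N * sqrt N)"
      unfolding g_def Aop_div by (simp add: sum_divide_distrib)
    also have "\<dots> = s" using N hA by simp
    finally show ?thesis .
  qed
  ultimately show ?thesis unfolding s_def L_def by blast
qed

end

theorem theorem1p2:
  fixes V :: "'a set" and E :: "'a \<Rightarrow> 'a \<Rightarrow> bool" and n k lam mu :: nat
  assumes "srg V E n k lam mu"
    and "mu \<ge> 1"
    and "\<exists>x\<in>V. \<exists>y\<in>V. x \<noteq> y \<and> \<not> E x y"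
  shows "(QEC V E \<le> 0 \<longleftrightarrow> int k - 2 * int lam + int mu \<le> 4)
       \<and> (QEC V E = 0 \<longleftrightarrow> int k - 2 * int lam + int mu = 4)"
proof -
  note srg = assms(1) and mu1 = assms(2)
  have fin: "finite V" using fin[OF srg mu1] .
  obtain x0 y0 where x0: "x0 \<in> V" and y0: "y0 \<in> V" and xy: "x0 \<noteq> y0" "\<not> E x0 y0"
    using assms(3) by blast
  obtain z0 where z0: "z0 \<in> V" "E x0 z0" "E z0 y0" using common_ex[OF srg mu1 x0 y0 xy] by blast
  have "card {z\<in>V. E x0 z \<and> E y0 z} \<le> card {z\<in>V. E x0 z}"
    using fin by (intro card_mono) auto
  hence kmu: "mu \<le> k" using muc[OF srg mu1 x0 y0 xy] degk[OF srg mu1 x0] by simp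
  have "card {z\<in>V. E x0 z \<and> E z0 z} \<le> card ({z\<in>V. E x0 z} - {z0})"
    using fin irr[OF srg mu1] by (intro card_mono) auto
  also have "\<dots> = k - 1" using z0 degk[OF srg mu1 x0] by (simp add: card_Diff_singleton)
  finally have "lam \<le> k - 1" using lamc[OF srg mu1 x0 z0(1) z0(2)] by simp
  moreover have "k \<ge> 1" using kmu mu1 by simp
  ultimately have lamk: "lam < k" by simp
  define L where "L = real lam - real mu"
  define d where "d = L\<^sup>2 + 4 * (real k - real mu)"
  define t where "t = sqrt d"
  have d0: "d > 0"
  proof (cases "mu < k")
    case True thus ?thesis unfolding d_def by (simp add: add_nonneg_pos)
  next
    case False
    hence "L \<noteq> 0" using lamk kmu unfolding L_def by simp
    thus ?thesis unfolding d_def using False kmu by simp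
  qed
  have t0: "t > 0" unfolding t_def using d0 by simp
  have tt: "t\<^sup>2 = L\<^sup>2 + 4 * (real k - real mu)" unfolding t_def d_def[symmetric] using d0 by simp
  have "\<bar>L\<bar> \<le> t" unfolding t_def d_def using kmu by (intro real_le_rsqrt) simp
  hence hr: "L + t \<ge> 0" by simp
  define s where "s = (L - t) / 2"
  define S where "S = {(\<Sum>x\<in>V. \<Sum>y\<in>V. f x * real (gdist V E x y) * f y) | f :: 'a \<Rightarrow> real.
       (\<Sum>x\<in>V. (f x)\<^sup>2) = 1 \<and> (\<Sum>x\<in>V. f x) = 0}"
  have "QEC V E = -2 - s" unfolding QEC_def S_def[symmetric]
  proof (rule cSup_eq_maximum)
    obtain g where g: "(\<Sum>z\<in>V. g z) = 0" "(\<Sum>z\<in>V. (g z)\<^sup>2) = 1" "(\<Sum>z\<in>V. g z * Aop V E g z) = s"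
      using witness[OF srg mu1 z0(2) t0 tt[unfolded L_def] hr[unfolded L_def]] unfolding s_def L_def by blast
    have "(\<Sum>x\<in>V. \<Sum>y\<in>V. g x * real (gdist V E x y) * g y) = -2 - s"
      using val[OF srg mu1 g(1)] g by simp
    thus "-2 - s \<in> S" unfolding S_def using g by force
  next
    fix v assume "v \<in> S"
    then obtain f where f: "(\<Sum>x\<in>V. (f x)\<^sup>2) = 1" "(\<Sum>x\<in>V. f x) = 0"
      and v: "v = (\<Sum>x\<in>V. \<Sum>y\<in>V. f x * real (gdist V E x y) * f y)" unfolding S_def by blast
    have "(\<Sum>x\<in>V. f x * Aop V E f x) \<ge> s"
      using lower[OF srg mu1 f(2) t0 tt[unfolded L_def]] f(1) unfolding s_def L_def by simp
    thus "v \<le> -2 - s" using v val[OF srg mu1 f(2)] f(1) by simp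
  qed
  moreover have "(-2 - s \<le> 0 \<longleftrightarrow> real k - 2 * real lam + real mu \<le> 4)
       \<and> (-2 - s = 0 \<longleftrightarrow> real k - 2 * real lam + real mu = 4)"
  proof -
    have key: "(L + 4)\<^sup>2 - t\<^sup>2 = 4 * (4 - (real k - 2 * real lam + real mu))"
      unfolding tt L_def by (simp add: power2_eq_square algebra_simps)
    have e1: "-2 - s \<le> 0 \<longleftrightarrow> t \<le> L + 4" unfolding s_def by auto
    have e2: "-2 - s = 0 \<longleftrightarrow> t = L + 4" unfolding s_def by auto
    have "t \<le> L + 4 \<longleftrightarrow> real k - 2 * real lam + real mu \<le> 4"
    proof
      assume a: "t \<le> L + 4"
      hence "t\<^sup>2 \<le> (L + 4)\<^sup>2" using t0 by (intro power_mono) auto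
      thus "real k - 2 * real lam + real mu \<le> 4" using key by simp
    next
      assume a: "real k - 2 * real lam + real mu \<le> 4"
      hence "L + 4 \<ge> 0" using kmu unfolding L_def by simp
      moreover have "t\<^sup>2 \<le> (L + 4)\<^sup>2" using key a by simp
      ultimately show "t \<le> L + 4" using power2_le_imp_le by blast
    qed
    moreover have "t = L + 4 \<longleftrightarrow> real k - 2 * real lam + real mu = 4"
    proof
      assume "t = L + 4"
      thus "real k - 2 * real lam + real mu = 4" using key by simp
    next
      assume a: "real k - 2 * real lam + real mu = 4"
      hence "L + 4 \<ge> 0" using kmu unfolding L_def by simp
      moreover have "t\<^sup>2 = (L + 4)\<^sup>2" using key a by simp
      ultimately show "t = L + 4" using t0 by (simp add: power2_eq_iff_nonneg)
    qed
    ultimately show ?thesis using e1 e2 by simp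
  qed
  moreover have "int k - 2 * int lam + int mu \<le> 4 \<longleftrightarrow> real k - 2 * real lam + real mu \<le> 4"
  proof -
    have "int k - 2 * int lam + int mu \<le> 4 \<longleftrightarrow> real_of_int (int k - 2 * int lam + int mu) \<le> real_of_int 4"
      by (rule of_int_le_iff[symmetric])
    thus ?thesis by simp
  qed
  moreover have "int k - 2 * int lam + int mu = 4 \<longleftrightarrow> real k - 2 * real lam + real mu = 4"
  proof -
    have "int k - 2 * int lam + int mu = 4 \<longleftrightarrow> real_of_int (int k - 2 * int lam + int mu) = real_of_int 4"
      by (rule of_int_eq_iff[symmetric])
    thus ?thesis by simp
  qed
  ultimately show ?thesis by simp
qed

end
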